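(* Let $r \ge 0$ be a fixed integer. There is a constant $C>0$ (depending only on $r$) such that for every $r$-rank connected graph $G$ with vertex set $V=[n]$, there exists a hypergraph $H$ on $[n]$ with at most $C n^{r+1}$ hyperedges (i.e. $\mathcal O(n^{r+1})$ hyperedges) such that $\mathrm{cl}_r(H) = H_r(G)$.
   Context: For a graph $G=(V,E)$ and $X\subseteq V$, write $\overline X = V\setminus X$. The cut-rank $\rho(X)$ is the rank over the two-element field $\mathbb{F}_2$ of the submatrix of the adjacency matrix of $G$ with rows indexed by $X$ and columns indexed by $\overline X$. A set $X\subseteq V$ (identified with the cut $(X,\overline X)$) is a $k$-split if $\rho(X)\le k$; it is trivial if $\rho(X)=\min(|X|,|\overline X|)$. $G$ is $r$-rank connected if every $k$-split with $k<r$ is trivial. $H_r(G)$ is the hypergraph with vertex set $[n]$ whose hyperedges are all $r$-splits of $G$. A hypergraph on $[n]$ is identified with its set of hyperedges (subsets of $[n]$). $\mathcal K_r(n)$ is the class of hypergraphs $\mathcal E$ on $V=[n]$ such that: (R0) every $X\subseteq V$ with $|X|\le r$ is in $\mathcal E$; (R1) if $A\in\mathcal E$ then $V\setminus A\in\mathcal E$; (R2) if $A,B\in\mathcal E$ and $|A\cap B|\ge r$ then $A\cup B\in\mathcal E$. For a hypergraph $H$ on $[n]$, $\mathrm{cl}_r(H)$ is the intersection of all hypergraphs in $\mathcal K_r(n)$ containing $H$. *)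

theory Defs
  imports Complex_Main
begin

text \<open>Vertex set [n] = {1..n}. A simple graph on [n] is a symmetric irreflexive
  relation E (only its restriction to [n] matters).\<close>

definition is_graph :: "nat \<Rightarrow> (nat \<Rightarrow> nat \<Rightarrow> bool) \<Rightarrow> bool" where
  "is_graph n E \<longleftrightarrow> (\<forall>u\<in>{1..n}. \<forall>v\<in>{1..n}. E u v = E v u) \<and> (\<forall>v\<in>{1..n}. \<not> E v v)"

text \<open>A set S of rows (vertices) is linearly independent over GF(2) in the submatrix
  with columns Y: no nonempty subset T of S has zero sum, i.e. for every nonempty
  T \<subseteq> S some column u \<in> Y has an odd number of ones among the rows in T.\<close>

definition gf2_indep :: "(nat \<Rightarrow> nat \<Rightarrow> bool) \<Rightarrow> nat set \<Rightarrow> nat set \<Rightarrow> bool" where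
  "gf2_indep E Y S \<longleftrightarrow>
     (\<forall>T\<subseteq>S. T \<noteq> {} \<longrightarrow> (\<exists>u\<in>Y. odd (card {v\<in>T. E v u})))"

definition gf2_rank :: "(nat \<Rightarrow> nat \<Rightarrow> bool) \<Rightarrow> nat set \<Rightarrow> nat set \<Rightarrow> nat" where
  "gf2_rank E X Y = Max {card S | S. S \<subseteq> X \<and> gf2_indep E Y S}"

definition cut_rank :: "nat \<Rightarrow> (nat \<Rightarrow> nat \<Rightarrow> bool) \<Rightarrow> nat set \<Rightarrow> nat" where
  "cut_rank n E X = gf2_rank E X ({1..n} - X)"

definition trivial_split :: "nat \<Rightarrow> (nat \<Rightarrow> nat \<Rightarrow> bool) \<Rightarrow> nat set \<Rightarrow> bool" where
  "trivial_split n E X \<longleftrightarrow> cut_rank n E X = min (card X) (card ({1..n} - X))"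

definition rank_connected :: "nat \<Rightarrow> nat \<Rightarrow> (nat \<Rightarrow> nat \<Rightarrow> bool) \<Rightarrow> bool" where
  "rank_connected r n E \<longleftrightarrow>
     (\<forall>X\<subseteq>{1..n}. \<forall>k<r. cut_rank n E X \<le> k \<longrightarrow> trivial_split n E X)"

definition splits_hypergraph :: "nat \<Rightarrow> nat \<Rightarrow> (nat \<Rightarrow> nat \<Rightarrow> bool) \<Rightarrow> nat set set" where
  "splits_hypergraph r n E = {X. X \<subseteq> {1..n} \<and> cut_rank n E X \<le> r}"

definition K_class :: "nat \<Rightarrow> nat \<Rightarrow> nat set set set" where
  "K_class r n = {\<E>. \<E> \<subseteq> Pow {1..n} \<and>
      (\<forall>X\<subseteq>{1..n}. card X \<le> r \<longrightarrow> X \<in> \<E>) \<and>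
      (\<forall>A\<in>\<E>. {1..n} - A \<in> \<E>) \<and>
      (\<forall>A\<in>\<E>. \<forall>B\<in>\<E>. card (A \<inter> B) \<ge> r \<longrightarrow> A \<union> B \<in> \<E>)}"

definition cl :: "nat \<Rightarrow> nat \<Rightarrow> nat set set \<Rightarrow> nat set set" where
  "cl r n H = \<Inter> {\<E> \<in> K_class r n. H \<subseteq> \<E>}"

end

theory Submission
  imports Defs "HOL-Library.Z2" "HOL-Library.Function_Algebras"
begin


definition sc :: "bit \<Rightarrow> (nat \<Rightarrow> bit) \<Rightarrow> (nat \<Rightarrow> bit)" where
  "sc c f = (\<lambda>x. c * f x)"

interpretation V: vector_space sc
  by unfold_locales (auto simp: sc_def fun_eq_iff distrib_left distrib_right mult.assoc simp del: add_bit_eq_xor mult_bit_eq_and)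

lemma sum_fun_apply: "(\<Sum>x\<in>S. f x) u = (\<Sum>x\<in>S. f x u)" for f :: "'a \<Rightarrow> nat \<Rightarrow> bit"
proof (induction S rule: infinite_finite_induct)
  case (infinite A) then show ?case by simp
next
  case empty then show ?case by simp
next
  case (insert x F) then show ?case by simp
qed

lemma bit_add_self: "(x::bit) + x = 0"
  by (cases x) simp_all

lemma fun_add_self: "(f::nat\<Rightarrow>bit) + f = 0"
  by (simp add: fun_eq_iff bit_add_self del: add_bit_eq_xor)

lemma sum_indicator_bit:
  "finite T \<Longrightarrow> (\<Sum>v\<in>T. (if P v then (1::bit) else 0)) = (if odd (card {v\<in>T. P v}) then 1 else 0)"
proof (induction T rule: finite_induct)
  case empty then show ?case by simp
next
  case (insert x F)
  have fin: "finite {v \<in> F. P v}" using insert by simp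
  show ?case
  proof (cases "P x")
    case True
    then have "{v \<in> insert x F. P v} = insert x {v \<in> F. P v}" by auto
    then have "card {v \<in> insert x F. P v} = Suc (card {v \<in> F. P v})" using fin insert by simp
    then show ?thesis using insert True by simp
  next
    case False
    then have "{v \<in> insert x F. P v} = {v \<in> F. P v}" by auto
    then show ?thesis using insert False by simp
  qed
qed

lemma sc_0[simp]: "sc 0 f = 0" and sc_1[simp]: "sc 1 f = f"
  by (simp_all add: sc_def fun_eq_iff)

definition rowv :: "(nat \<Rightarrow> nat \<Rightarrow> bool) \<Rightarrow> nat set \<Rightarrow> nat \<Rightarrow> (nat \<Rightarrow> bit)" where
  "rowv E Y v = (\<lambda>u. if u \<in> Y \<and> E v u then 1 else 0)"

lemma sum_rowv_apply:
  assumes "finite T"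
  shows "(\<Sum>v\<in>T. rowv E Y v) u = (if u \<in> Y \<and> odd (card {v\<in>T. E v u}) then 1 else 0)"
proof -
  have "(\<Sum>v\<in>T. rowv E Y v) u = (\<Sum>v\<in>T. (if u \<in> Y \<and> E v u then (1::bit) else 0))"
    by (simp add: sum_fun_apply rowv_def)
  also have "\<dots> = (if odd (card {v\<in>T. u \<in> Y \<and> E v u}) then 1 else 0)"
    by (rule sum_indicator_bit[OF assms])
  also have "\<dots> = (if u \<in> Y \<and> odd (card {v\<in>T. E v u}) then 1 else 0)"
    by (cases "u \<in> Y") simp_all
  finally show ?thesis .
qed

lemma sum_rowv_zero_iff:
  assumes "finite T"
  shows "(\<Sum>v\<in>T. rowv E Y v) = 0 \<longleftrightarrow> \<not> (\<exists>u\<in>Y. odd (card {v\<in>T. E v u}))"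
  by (auto simp: fun_eq_iff sum_rowv_apply[OF assms] split: if_splits)



lemma indep_to_gf2:
  assumes fin: "finite S" and inj: "inj_on (rowv E Y) S" and ind: "V.independent (rowv E Y ` S)"
  shows "gf2_indep E Y S"
  unfolding gf2_indep_def
proof (intro allI impI)
  fix T assume T: "T \<subseteq> S" "T \<noteq> {}"
  have finT: "finite T" using T fin finite_subset by blast
  show "\<exists>u\<in>Y. odd (card {v \<in> T. E v u})"
  proof (rule ccontr)
    assume "\<not> (\<exists>u\<in>Y. odd (card {v \<in> T. E v u}))"
    then have z: "(\<Sum>v\<in>T. rowv E Y v) = 0" using sum_rowv_zero_iff[OF finT] by blast
    have injT: "inj_on (rowv E Y) T" using inj T inj_on_subset by blast
    have "(\<Sum>w\<in>rowv E Y ` T. sc 1 w) = (\<Sum>v\<in>T. rowv E Y v)"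
      using sum.reindex[OF injT, of "\<lambda>w. w"] by simp
    then have z2: "(\<Sum>w\<in>rowv E Y ` T. sc ((\<lambda>_. (1::bit)) w) w) = 0" 
      using z by simp
    obtain v0 where v0: "v0 \<in> T" using T by blast
    have "(\<lambda>_. (1::bit)) (rowv E Y v0) = 0"
      by (rule V.independentD[OF ind _ _ z2]) (use finT T v0 in auto)
    then show False by simp
  qed
qed

lemma sum_sc_bit:
  fixes t :: "(nat \<Rightarrow> bit) set"
  assumes "finite t"
  shows "(\<Sum>x\<in>t. sc (c x) x) = (\<Sum>x\<in>{x\<in>t. c x = 1}. x)"
proof -
  have "(\<Sum>x\<in>t. sc (c x) x) = (\<Sum>x\<in>t. if c x = 1 then x else 0)"
    by (rule sum.cong) (auto simp del: add_bit_eq_xor mult_bit_eq_and)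
  also have "\<dots> = (\<Sum>x\<in>{x\<in>t. c x = 1}. x)"
    by (simp add: sum.inter_filter[OF assms])
  finally show ?thesis .
qed

lemma gf2_to_inj:
  assumes fin: "finite S" and g: "gf2_indep E Y S"
  shows "inj_on (rowv E Y) S"
proof (rule inj_onI, rule ccontr)
  fix a b assume ab: "a \<in> S" "b \<in> S" "rowv E Y a = rowv E Y b" "a \<noteq> b"
  have "(\<Sum>v\<in>{a,b}. rowv E Y v) = rowv E Y a + rowv E Y b"
    using ab(4) by simp
  also have "\<dots> = rowv E Y a + rowv E Y a" using ab(3) by simp
  also have "\<dots> = 0" by (rule fun_add_self)
  finally have z: "(\<Sum>v\<in>{a,b}. rowv E Y v) = 0" .
  have "\<not> (\<exists>u\<in>Y. odd (card {v\<in>{a,b}. E v u}))"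
    using sum_rowv_zero_iff[of "{a,b}" E Y] z by simp
  moreover have "\<exists>u\<in>Y. odd (card {v\<in>{a,b}. E v u})"
    using g[unfolded gf2_indep_def, rule_format, of "{a,b}"] ab(1,2) by simp
  ultimately show False by blast
qed

lemma gf2_to_indep:
  assumes fin: "finite S" and g: "gf2_indep E Y S"
  shows "V.independent (rowv E Y ` S)"
proof -
  have inj: "inj_on (rowv E Y) S" by (rule gf2_to_inj[OF fin g])
  show ?thesis unfolding V.independent_explicit_module
  proof (intro allI impI)
    fix t c w assume t: "finite t" "t \<subseteq> rowv E Y ` S" and s: "(\<Sum>v\<in>t. sc (c v) v) = 0" and w: "w \<in> t"
    show "c w = 0"
    proof (rule ccontr)
      assume cw: "c w \<noteq> 0"
      let ?t' = "{x\<in>t. c x = 1}"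
      have s': "(\<Sum>x\<in>?t'. x) = 0" using s sum_sc_bit[OF t(1), of c] by simp
      let ?T = "{v\<in>S. rowv E Y v \<in> ?t'}"
      have injT: "inj_on (rowv E Y) ?T" by (rule inj_on_subset[OF inj]) blast
      have img: "rowv E Y ` ?T = ?t'" using t(2) by auto
      have "(\<Sum>v\<in>?T. rowv E Y v) = (\<Sum>x\<in>?t'. x)"
        using sum.reindex[OF injT, of "\<lambda>x. x"] img by simp
      then have z: "(\<Sum>v\<in>?T. rowv E Y v) = 0" using s' by simp
      have finT: "finite ?T" using fin by simp
      have "w \<in> ?t'" using w cw by simp
      then have ne: "?T \<noteq> {}" using img by blast
      have "\<exists>u\<in>Y. odd (card {v\<in>?T. E v u})"
        using g[unfolded gf2_indep_def, rule_format, of ?T] ne by blast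
      then show False using z sum_rowv_zero_iff[OF finT] by blast
    qed
  qed
qed

lemma gf2_rank_dim:
  assumes fin: "finite X"
  shows "gf2_rank E X Y = V.dim (rowv E Y ` X)"
proof -
  let ?A = "{card S | S. S \<subseteq> X \<and> gf2_indep E Y S}"
  let ?d = "V.dim (rowv E Y ` X)"
  obtain B where B: "B \<subseteq> rowv E Y ` X" "V.independent B" "rowv E Y ` X \<subseteq> V.span B" "card B = ?d"
    using V.basis_exists by blast
  have finB: "finite B" using B(1) fin finite_subset by blast
  define S where "S = inv_into X (rowv E Y) ` B"
  have SX: "S \<subseteq> X" unfolding S_def using B(1) by (auto intro: inv_into_into)
  have imgS: "rowv E Y ` S = B" unfolding S_def using B(1)
    by (simp add: image_image f_inv_into_f subset_iff cong: image_cong)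
  have fi: "rowv E Y (inv_into X (rowv E Y) b) = b" if "b \<in> B" for b
    using B(1) that by (simp add: f_inv_into_f subset_iff)
  have injS: "inj_on (rowv E Y) S"
  proof (rule inj_onI)
    fix x y assume "x \<in> S" "y \<in> S" "rowv E Y x = rowv E Y y"
    then obtain bx b2 where "bx \<in> B" "b2 \<in> B" "x = inv_into X (rowv E Y) bx" "y = inv_into X (rowv E Y) b2"
      unfolding S_def by blast
    then show "x = y" using fi \<open>rowv E Y x = rowv E Y y\<close> by metis
  qed
  have finS: "finite S" using SX fin finite_subset by blast
  have cS: "card S = ?d" using card_image[OF injS] imgS B(4) by simp
  have gi: "gf2_indep E Y S" by (rule indep_to_gf2[OF finS injS]) (use imgS B(2) in simp)
  have dA: "?d \<in> ?A"
    unfolding mem_Collect_eq by (rule exI[of _ S]) (use SX cS gi in simp)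
  have le: "a \<le> ?d" if "a \<in> ?A" for a
  proof -
    obtain S' where S': "a = card S'" "S' \<subseteq> X" "gf2_indep E Y S'" using \<open>a \<in> ?A\<close> by blast
    have finS': "finite S'" using S'(2) fin finite_subset by blast
    have inj': "inj_on (rowv E Y) S'" by (rule gf2_to_inj[OF finS' S'(3)])
    have ind': "V.independent (rowv E Y ` S')" by (rule gf2_to_indep[OF finS' S'(3)])
    obtain B' where B': "rowv E Y ` S' \<subseteq> B'" "B' \<subseteq> rowv E Y ` X" "V.independent B'" "rowv E Y ` X \<subseteq> V.span B'"
      using V.maximal_independent_subset_extend[of "rowv E Y ` S'" "rowv E Y ` X"] ind' S'(2) by blast
    have cB': "card B' = ?d" using V.basis_card_eq_dim[OF B'(2) B'(4) B'(3)] .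
    have finB': "finite B'" using B'(2) fin finite_subset by blast
    have "card S' = card (rowv E Y ` S')" using card_image[OF inj'] by simp
    also have "\<dots> \<le> card B'" using card_mono[OF finB' B'(1)] .
    finally show ?thesis using S'(1) cB' by simp
  qed
  have finA: "finite ?A"
    by (rule finite_subset[of _ "card ` Pow X"]) (use fin in auto)
  show ?thesis unfolding gf2_rank_def
    by (rule Max_eqI[OF finA]) (use le dA in auto)
qed



lemma sc_apply: "sc c f x = c * f x" by (simp add: sc_def)

lemma col_le_row:
  assumes finX: "finite X" and finY: "finite Y" and sym: "\<forall>a\<in>X. \<forall>b\<in>Y. E a b = E b a"
  shows "V.dim (rowv E X ` Y) \<le> V.dim (rowv E Y ` X)"
proof -
  obtain B where B: "B \<subseteq> rowv E Y ` X" "V.independent B" "rowv E Y ` X \<subseteq> V.span B"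
      "card B = V.dim (rowv E Y ` X)"
    using V.basis_exists by blast
  have finB: "finite B" using B(1) finX finite_subset by blast
  have ex: "\<exists>c. rowv E Y v = (\<Sum>b\<in>B. sc (c b) b)" if "v \<in> X" for v
  proof -
    have "rowv E Y v \<in> V.span B" using B(3) that by blast
    then show ?thesis unfolding V.span_finite[OF finB] by blast
  qed
  define cf where "cf v = (SOME c. rowv E Y v = (\<Sum>b\<in>B. sc (c b) b))" for v
  have cf: "rowv E Y v = (\<Sum>b\<in>B. sc (cf v b) b)" if "v \<in> X" for v
    unfolding cf_def by (rule someI_ex[OF ex[OF that]])
  define a where "a b = (\<lambda>v. if v \<in> X then cf v b else 0)" for b
  have col: "rowv E X u = (\<Sum>b\<in>B. sc (b u) (a b))" if u: "u \<in> Y" for u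
  proof
    fix v
    show "rowv E X u v = (\<Sum>b\<in>B. sc (b u) (a b)) v"
    proof (cases "v \<in> X")
      case True
      have "(\<Sum>b\<in>B. sc (b u) (a b)) v = (\<Sum>b\<in>B. b u * cf v b)"
        unfolding sum_fun_apply sc_apply a_def using True by simp
      also have "\<dots> = (\<Sum>b\<in>B. cf v b * b u)"
        by (rule sum.cong) (simp_all only: mult.commute)
      also have "\<dots> = (\<Sum>b\<in>B. sc (cf v b) b) u"
        unfolding sum_fun_apply sc_apply by simp
      also have "\<dots> = rowv E Y v u" using cf[OF True] by simp
      also have "\<dots> = rowv E X u v" unfolding rowv_def using True u sym by auto
      finally show ?thesis by simp
    next
      case False
      have "(\<Sum>b\<in>B. sc (b u) (a b)) v = 0"
        unfolding sum_fun_apply sc_apply a_def using False by simp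
      moreover have "rowv E X u v = 0" unfolding rowv_def using False by simp
      ultimately show ?thesis by simp
    qed
  qed
  have "rowv E X ` Y \<subseteq> V.span (a ` B)"
  proof
    fix w assume "w \<in> rowv E X ` Y"
    then obtain u where u: "u \<in> Y" "w = rowv E X u" by blast
    have "(\<Sum>b\<in>B. sc (b u) (a b)) \<in> V.span (a ` B)"
      by (intro V.span_sum V.span_scale V.span_base) blast
    then show "w \<in> V.span (a ` B)" using col[OF u(1)] u(2) by simp
  qed
  then have "V.dim (rowv E X ` Y) \<le> card (a ` B)" using V.dim_le_card finB by blast
  also have "\<dots> \<le> card B" using card_image_le[OF finB] .
  finally show ?thesis using B(4) by simp
qed

lemma cut_rank_sym:
  assumes G: "is_graph n E" and X: "X \<subseteq> {1..n}"
  shows "cut_rank n E ({1..n} - X) = cut_rank n E X"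
proof -
  have fX: "finite X" using X finite_subset by blast
  have fC: "finite ({1..n} - X)" by simp
  have sym1: "\<forall>a\<in>X. \<forall>b\<in>{1..n} - X. E a b = E b a" using G X unfolding is_graph_def by blast
  have sym2: "\<forall>a\<in>{1..n} - X. \<forall>b\<in>X. E a b = E b a" using G X unfolding is_graph_def by blast
  have e: "{1..n} - ({1..n} - X) = X" using X by blast
  have "cut_rank n E ({1..n} - X) = V.dim (rowv E X ` ({1..n} - X))"
    unfolding cut_rank_def e by (rule gf2_rank_dim[OF fC])
  also have "\<dots> = V.dim (rowv E ({1..n} - X) ` X)"
    using col_le_row[OF fX fC sym1] col_le_row[OF fC fX sym2] by simp
  also have "\<dots> = cut_rank n E X"
    unfolding cut_rank_def by (rule gf2_rank_dim[OF fX, symmetric])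
  finally show ?thesis .
qed



definition unitv :: "nat \<Rightarrow> (nat \<Rightarrow> bit)" where
  "unitv c = (\<lambda>u. if u = c then 1 else 0)"

lemma sum_sc_apply: "(\<Sum>v\<in>t. sc (c v) v) u = (\<Sum>v\<in>t. c v * v u)"
  unfolding sum_fun_apply sc_apply ..

lemma indep_union_supp:
  assumes iA: "V.independent A" and iB: "V.independent B"
    and sA: "\<And>a u. a \<in> A \<Longrightarrow> u \<notin> Y \<Longrightarrow> a u = 0"
    and sB: "\<And>b u. b \<in> B \<Longrightarrow> u \<in> Y \<Longrightarrow> b u = 0"
  shows "V.independent (A \<union> B)"
  unfolding V.independent_explicit_module
proof (intro allI impI)
  fix t c w assume t: "finite t" "t \<subseteq> A \<union> B" and s: "(\<Sum>v\<in>t. sc (c v) v) = 0" and w: "w \<in> t"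
  define s1 where "s1 = (\<Sum>v\<in>t \<inter> A. sc (c v) v)"
  define s2 where "s2 = (\<Sum>v\<in>t - A. sc (c v) v)"
  have s12: "s1 + s2 = 0" using s sum.Int_Diff[OF t(1), of "\<lambda>v. sc (c v) v" A] unfolding s1_def s2_def by simp
  have z1: "s1 u = 0" if "u \<notin> Y" for u
    unfolding s1_def sum_sc_apply by (rule sum.neutral) (use sA that in auto)
  have z2: "s2 u = 0" if "u \<in> Y" for u
    unfolding s2_def sum_sc_apply by (rule sum.neutral) (use sB that t(2) in auto)
  have s1z: "s1 = 0"
  proof
    fix u show "s1 u = 0 u"
    proof (cases "u \<in> Y")
      case True
      have "s1 u + s2 u = 0" using s12 by (metis plus_fun_apply zero_fun_apply)
      then show ?thesis using z2[OF True] by simp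
    qed (use z1 in simp)
  qed
  have s2z: "s2 = 0"
  proof
    fix u show "s2 u = 0 u"
    proof (cases "u \<in> Y")
      case False
      have "s1 u + s2 u = 0" using s12 by (metis plus_fun_apply zero_fun_apply)
      then show ?thesis using z1[OF False] by simp
    qed (use z2 in simp)
  qed
  show "c w = 0"
  proof (cases "w \<in> A")
    case True
    show ?thesis
      by (rule V.independentD[OF iA _ _ s1z[unfolded s1_def]]) (use t True w in auto)
  next
    case False
    show ?thesis
      by (rule V.independentD[OF iB _ _ s2z[unfolded s2_def]]) (use t False w in auto)
  qed
qed

lemma unitv_apply: "unitv c u = (if u = c then 1 else 0)" by (simp add: unitv_def)

lemma unitv_inj: "inj unitv"
proof (rule injI)
  fix a b assume "unitv a = unitv b"
  then have "unitv a a = unitv b a" by simp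
  then show "a = b" by (simp add: unitv_apply split: if_splits)
qed

lemma unitv_indep: "V.independent (unitv ` C)"
  unfolding V.independent_explicit_module
proof (intro allI impI)
  fix t c w assume t: "finite t" "t \<subseteq> unitv ` C" and s: "(\<Sum>v\<in>t. sc (c v) v) = 0" and w: "w \<in> t"
  obtain c0 where c0: "w = unitv c0" using t(2) w by blast
  have "(\<Sum>v\<in>t. c v * v c0) = (\<Sum>v\<in>t. if v = w then c v else 0)"
  proof (rule sum.cong)
    fix v assume "v \<in> t"
    then obtain c' where c': "v = unitv c'" using t(2) by blast
    have "v = w \<longleftrightarrow> c' = c0" using c' c0 unitv_inj by (auto dest: injD)
    then show "c v * v c0 = (if v = w then c v else 0)" using c' by (auto simp: unitv_apply)
  qed simp
  also have "\<dots> = c w" using w t(1) by simp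
  finally have "c w = (\<Sum>v\<in>t. sc (c v) v) c0" unfolding sum_sc_apply by simp
  then show "c w = 0" using s by simp
qed

lemma dim_mono_fin:
  assumes "finite T" "S \<subseteq> T"
  shows "V.dim S \<le> V.dim T"
proof -
  obtain B where B: "B \<subseteq> T" "V.independent B" "T \<subseteq> V.span B" "card B = V.dim T"
    using V.basis_exists by blast
  have "finite B" using B(1) assms(1) finite_subset by blast
  then have "V.dim S \<le> card B" using V.dim_le_card[of S B] B(3) assms(2) by blast
  then show ?thesis using B(4) by simp
qed

lemma dim_submod:
  assumes fA: "finite A" and fB: "finite B"
  shows "V.dim (A \<union> B) + V.dim (A \<inter> B) \<le> V.dim A + V.dim B"
proof -
  obtain I where I: "I \<subseteq> A \<inter> B" "V.independent I" "A \<inter> B \<subseteq> V.span I" "card I = V.dim (A \<inter> B)"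
    using V.basis_exists by blast
  obtain BA where BA: "I \<subseteq> BA" "BA \<subseteq> A" "V.independent BA" "A \<subseteq> V.span BA"
    using V.maximal_independent_subset_extend[of I A] I by blast
  obtain BB where BB: "I \<subseteq> BB" "BB \<subseteq> B" "V.independent BB" "B \<subseteq> V.span BB"
    using V.maximal_independent_subset_extend[of I B] I by blast
  have cA: "card BA = V.dim A" using V.basis_card_eq_dim[OF BA(2) BA(4) BA(3)] .
  have cB: "card BB = V.dim B" using V.basis_card_eq_dim[OF BB(2) BB(4) BB(3)] .
  have fBA: "finite BA" using BA(2) fA finite_subset by blast
  have fBB: "finite BB" using BB(2) fB finite_subset by blast
  have "A \<union> B \<subseteq> V.span (BA \<union> BB)"
    using BA(4) BB(4) V.span_mono[of BA "BA \<union> BB"] V.span_mono[of BB "BA \<union> BB"] by blast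
  then have d: "V.dim (A \<union> B) \<le> card (BA \<union> BB)" using V.dim_le_card fBA fBB by blast
  have "card (BA \<union> BB) + card (BA \<inter> BB) = card BA + card BB"
    using card_Un_Int[OF fBA fBB] by simp
  moreover have "card I \<le> card (BA \<inter> BB)"
    using card_mono[of "BA \<inter> BB" I] fBA BA(1) BB(1) by blast
  ultimately show ?thesis using d cA cB I(4) by linarith
qed

lemma rowv_split:
  assumes YV: "Y \<subseteq> V" and fV: "finite V"
  shows "rowv E V v = rowv E Y v + (\<Sum>c\<in>V - Y. sc (if E v c then 1 else 0) (unitv c))"
proof
  fix x
  have "(\<Sum>c\<in>V - Y. sc (if E v c then 1 else 0) (unitv c)) x
      = (\<Sum>c\<in>V - Y. if c = x then (if E v x then 1 else 0) else (0::bit))"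
    unfolding sum_fun_apply sc_apply unitv_apply by (rule sum.cong) auto
  also have "\<dots> = (if x \<in> V - Y then (if E v x then 1 else 0) else 0)"
    using fV by simp
  finally have h: "(\<Sum>c\<in>V - Y. sc (if E v c then 1 else 0) (unitv c)) x
      = (if x \<in> V - Y then (if E v x then 1 else 0) else 0)" .
  show "rowv E V v x = (rowv E Y v + (\<Sum>c\<in>V - Y. sc (if E v c then 1 else 0) (unitv c))) x"
    unfolding plus_fun_apply h using YV by (auto simp: rowv_def)
qed

lemma dim_Z:
  assumes YV: "Y \<subseteq> V" and fV: "finite V" and fX: "finite X"
  shows "V.dim (rowv E V ` X \<union> unitv ` (V - Y)) = card (V - Y) + V.dim (rowv E Y ` X)"
proof -
  let ?R = "rowv E Y ` X" and ?U = "unitv ` (V - Y)"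
  define w where "w v = (\<Sum>c\<in>V - Y. sc (if E v c then 1 else 0) (unitv c))" for v
  have wU: "w v \<in> V.span ?U" for v
    unfolding w_def by (intro V.span_sum V.span_scale V.span_base) blast
  have sp1: "w v \<in> V.span S" if "?U \<subseteq> S" for v S
    using wU V.span_mono[OF that] by blast
  have split: "rowv E V v = rowv E Y v + w v" for v
    unfolding w_def by (rule rowv_split[OF YV fV])
  have split2: "rowv E Y v = rowv E V v + w v" for v
  proof -
    have "rowv E V v + w v = rowv E Y v + (w v + w v)" using split[of v] by (simp add: add.assoc)
    also have "\<dots> = rowv E Y v" by (simp add: fun_add_self)
    finally show ?thesis by simp
  qed
  have "V.span (rowv E V ` X \<union> ?U) = V.span (?R \<union> ?U)"
    unfolding V.span_eq
  proof
    show "rowv E V ` X \<union> ?U \<subseteq> V.span (?R \<union> ?U)"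
    proof
      fix z assume "z \<in> rowv E V ` X \<union> ?U"
      then show "z \<in> V.span (?R \<union> ?U)"
      proof
        assume "z \<in> rowv E V ` X"
        then obtain v where v: "v \<in> X" "z = rowv E V v" by blast
        have "rowv E Y v \<in> V.span (?R \<union> ?U)" using v(1) by (intro V.span_base) blast
        moreover have "w v \<in> V.span (?R \<union> ?U)" by (rule sp1) blast
        ultimately show ?thesis using v(2) split[of v] V.span_add by metis
      qed (blast intro: V.span_base)
    qed
    show "?R \<union> ?U \<subseteq> V.span (rowv E V ` X \<union> ?U)"
    proof
      fix z assume "z \<in> ?R \<union> ?U"
      then show "z \<in> V.span (rowv E V ` X \<union> ?U)"
      proof
        assume "z \<in> ?R"
        then obtain v where v: "v \<in> X" "z = rowv E Y v" by blast
        have "rowv E V v \<in> V.span (rowv E V ` X \<union> ?U)" using v(1) by (intro V.span_base) blast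
        moreover have "w v \<in> V.span (rowv E V ` X \<union> ?U)" by (rule sp1) blast
        ultimately show ?thesis using v(2) split2[of v] V.span_add by metis
      qed (blast intro: V.span_base)
    qed
  qed
  then have e1: "V.dim (rowv E V ` X \<union> ?U) = V.dim (?R \<union> ?U)" by (rule V.span_eq_dim)
  obtain BR where BR: "BR \<subseteq> ?R" "V.independent BR" "?R \<subseteq> V.span BR" "card BR = V.dim ?R"
    using V.basis_exists by blast
  have fBR: "finite BR" using BR(1) fX finite_subset by blast
  have fU: "finite ?U" using fV by simp
  have sR: "b u = 0" if "b \<in> BR" "u \<notin> Y" for b u using that BR(1) by (auto simp: rowv_def)
  have sU: "b u = 0" if "b \<in> ?U" "u \<in> Y" for b u using that by (auto simp: unitv_def)
  have ind: "V.independent (BR \<union> ?U)"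
    by (rule indep_union_supp[OF BR(2) unitv_indep, of Y]) (use sR sU in auto)
  have disj: "BR \<inter> ?U = {}"
  proof (rule ccontr)
    assume "BR \<inter> ?U \<noteq> {}"
    then obtain b where b: "b \<in> BR" "b \<in> ?U" by blast
    have "b = 0"
    proof
      fix u show "b u = 0 u" using sR[OF b(1)] sU[OF b(2)] by (cases "u \<in> Y") auto
    qed
    then show False using BR(2) V.dependent_zero b(1) by blast
  qed
  have cU: "card ?U = card (V - Y)" using card_image[OF inj_on_subset[OF unitv_inj]] by blast
  have sub1: "BR \<union> ?U \<subseteq> ?R \<union> ?U" using BR(1) by blast
  have sub2: "?R \<union> ?U \<subseteq> V.span (BR \<union> ?U)"
    using BR(3) V.span_mono[of BR "BR \<union> ?U"] V.span_superset[of "BR \<union> ?U"] by blast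
  have "card (BR \<union> ?U) = V.dim (?R \<union> ?U)" by (rule V.basis_card_eq_dim[OF sub1 sub2 ind])
  moreover have "card (BR \<union> ?U) = card BR + card ?U" using card_Un_disjoint[OF fBR fU disj] .
  ultimately show ?thesis using e1 BR(4) cU by simp
qed

lemma rank_submod:
  assumes fV: "finite V" and X1: "X1 \<subseteq> V" and X2: "X2 \<subseteq> V" and Y1: "Y1 \<subseteq> V" and Y2: "Y2 \<subseteq> V"
  shows "V.dim (rowv E (Y1 \<union> Y2) ` (X1 \<inter> X2)) + V.dim (rowv E (Y1 \<inter> Y2) ` (X1 \<union> X2))
     \<le> V.dim (rowv E Y1 ` X1) + V.dim (rowv E Y2 ` X2)"
proof -
  define Z where "Z X Y = rowv E V ` X \<union> unitv ` (V - Y)" for X Y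
  have fX: "finite X" if "X \<subseteq> V" for X using that fV finite_subset by blast
  have dZ: "V.dim (Z X Y) = card (V - Y) + V.dim (rowv E Y ` X)" if "X \<subseteq> V" "Y \<subseteq> V" for X Y
    unfolding Z_def by (rule dim_Z[OF that(2) fV fX[OF that(1)]])
  have fZ: "finite (Z X Y)" if "X \<subseteq> V" for X Y unfolding Z_def using fX[OF that] fV by simp
  have un: "Z X1 Y1 \<union> Z X2 Y2 = Z (X1 \<union> X2) (Y1 \<inter> Y2)" unfolding Z_def by blast
  have int: "Z (X1 \<inter> X2) (Y1 \<union> Y2) \<subseteq> Z X1 Y1 \<inter> Z X2 Y2" unfolding Z_def by blast
  have m: "V.dim (Z (X1 \<inter> X2) (Y1 \<union> Y2)) \<le> V.dim (Z X1 Y1 \<inter> Z X2 Y2)"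
    by (rule dim_mono_fin[OF _ int]) (use fZ[OF X1] in blast)
  have s: "V.dim (Z X1 Y1 \<union> Z X2 Y2) + V.dim (Z X1 Y1 \<inter> Z X2 Y2) \<le> V.dim (Z X1 Y1) + V.dim (Z X2 Y2)"
    by (rule dim_submod[OF fZ[OF X1] fZ[OF X2]])
  have c: "card (V - (Y1 \<union> Y2)) + card (V - (Y1 \<inter> Y2)) = card (V - Y1) + card (V - Y2)"
  proof -
    have "card (V - Y1) + card (V - Y2) = card ((V - Y1) \<union> (V - Y2)) + card ((V - Y1) \<inter> (V - Y2))"
      by (rule card_Un_Int) (use fV in auto)
    moreover have "(V - Y1) \<union> (V - Y2) = V - (Y1 \<inter> Y2)" by blast
    moreover have "(V - Y1) \<inter> (V - Y2) = V - (Y1 \<union> Y2)" by blast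
    ultimately show ?thesis by simp
  qed
  have IV: "X1 \<inter> X2 \<subseteq> V" and UV: "X1 \<union> X2 \<subseteq> V" and YI: "Y1 \<inter> Y2 \<subseteq> V" and YU: "Y1 \<union> Y2 \<subseteq> V"
    using X1 X2 Y1 Y2 by auto
  show ?thesis
    using m s c un dZ[OF IV YU] dZ[OF UV YI] dZ[OF X1 Y1] dZ[OF X2 Y2] by simp
qed

lemma cut_rank_submod:
  assumes A: "A \<subseteq> {1..n}" and B: "B \<subseteq> {1..n}"
  shows "cut_rank n E (A \<inter> B) + cut_rank n E (A \<union> B) \<le> cut_rank n E A + cut_rank n E B"
proof -
  let ?V = "{1..n::nat}"
  have cr: "cut_rank n E X = V.dim (rowv E (?V - X) ` X)" if "X \<subseteq> ?V" for X
    unfolding cut_rank_def by (rule gf2_rank_dim) (use that finite_subset in blast)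
  have e1: "(?V - A) \<union> (?V - B) = ?V - (A \<inter> B)" by blast
  have e2: "(?V - A) \<inter> (?V - B) = ?V - (A \<union> B)" by blast
  have "V.dim (rowv E ((?V - A) \<union> (?V - B)) ` (A \<inter> B)) + V.dim (rowv E ((?V - A) \<inter> (?V - B)) ` (A \<union> B))
     \<le> V.dim (rowv E (?V - A) ` A) + V.dim (rowv E (?V - B) ` B)"
    by (rule rank_submod) (use A B in auto)
  moreover have "cut_rank n E (A \<inter> B) = V.dim (rowv E (?V - (A \<inter> B)) ` (A \<inter> B))" by (rule cr) (use A in blast)
  moreover have "cut_rank n E (A \<union> B) = V.dim (rowv E (?V - (A \<union> B)) ` (A \<union> B))" by (rule cr) (use A B in blast)
  moreover have "cut_rank n E A = V.dim (rowv E (?V - A) ` A)" by (rule cr[OF A])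
  moreover have "cut_rank n E B = V.dim (rowv E (?V - B) ` B)" by (rule cr[OF B])
  ultimately show ?thesis unfolding e1 e2 by linarith
qed



lemma K_union_family:
  assumes K: "K \<in> K_class r n" and fin: "finite \<Y>" and ne: "\<Y> \<noteq> {}"
    and sub: "\<Y> \<subseteq> K" and S: "\<And>Y. Y \<in> \<Y> \<Longrightarrow> S \<subseteq> Y" and cS: "card S \<ge> r"
  shows "\<Union>\<Y> \<in> K"
  using fin ne sub S
proof (induction \<Y> rule: finite_ne_induct)
  case (singleton x)
  then show ?case by simp
next
  case (insert A \<Y>)
  have AK: "A \<in> K" and UK: "\<Union>\<Y> \<in> K" using insert by auto
  have "S \<subseteq> A \<inter> \<Union>\<Y>" using insert.prems insert.hyps(2) by blast
  moreover have "A \<subseteq> {1..n}" using AK K unfolding K_class_def by blast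
  moreover have "finite (A \<inter> \<Union>\<Y>)"
    using \<open>A \<subseteq> {1..n}\<close> by (meson finite_Int finite_atLeastAtMost finite_subset)
  ultimately have "card S \<le> card (A \<inter> \<Union>\<Y>)"
    using card_mono by blast
  then have "card (A \<inter> \<Union>\<Y>) \<ge> r" using cS by linarith
  then have "A \<union> \<Union>\<Y> \<in> K" using K AK UK unfolding K_class_def by blast
  then show ?case by simp
qed

definition minover :: "nat set set \<Rightarrow> nat set \<Rightarrow> nat set \<Rightarrow> bool" where
  "minover F R X \<longleftrightarrow> R \<subseteq> X \<and> (\<forall>Y\<in>F. R \<subseteq> Y \<and> Y \<subseteq> X \<longrightarrow> Y = X)"

definition Hgen :: "nat \<Rightarrow> nat \<Rightarrow> nat set set \<Rightarrow> nat set set" where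
  "Hgen r n F = {X \<in> F. r < card X \<and> 2 * card X \<le> n \<and> (\<exists>R. card R = Suc r \<and> minover F R X)}"

lemma K_sub: "F \<in> K_class r n \<Longrightarrow> X \<in> F \<Longrightarrow> X \<subseteq> {1..n}"
  unfolding K_class_def by blast

lemma K_compl: "F \<in> K_class r n \<Longrightarrow> X \<in> F \<Longrightarrow> {1..n} - X \<in> F"
  unfolding K_class_def by blast

lemma K_small: "F \<in> K_class r n \<Longrightarrow> X \<subseteq> {1..n} \<Longrightarrow> card X \<le> r \<Longrightarrow> X \<in> F"
  unfolding K_class_def by blast

lemma K_un: "F \<in> K_class r n \<Longrightarrow> A \<in> F \<Longrightarrow> B \<in> F \<Longrightarrow> card (A \<inter> B) \<ge> r \<Longrightarrow> A \<union> B \<in> F"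
  unfolding K_class_def by blast


lemma minover_unique2:
  assumes F: "F \<in> K_class r n"
    and X1: "X1 \<in> Hgen r n F" and X2: "X2 \<in> Hgen r n F"
    and R: "card R = Suc r" and m1: "minover F R X1" and m2: "minover F R X2"
  shows "X1 = X2"
proof -
  have X1F: "X1 \<in> F" and X2F: "X2 \<in> F" using X1 X2 unfolding Hgen_def by auto
  have V1: "X1 \<subseteq> {1..n}" and V2: "X2 \<subseteq> {1..n}" using K_sub[OF F] X1F X2F by auto
  have f1: "finite X1" and f2: "finite X2" using V1 V2 finite_subset by blast+
  have s1: "2 * card X1 \<le> n" and s2: "2 * card X2 \<le> n" using X1 X2 unfolding Hgen_def by auto
  have RI: "R \<subseteq> X1 \<inter> X2" using m1 m2 unfolding minover_def by blast
  define Z where "Z = ({1..n} - X1) \<inter> ({1..n} - X2)"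
  have ZU: "Z = {1..n} - (X1 \<union> X2)" unfolding Z_def by blast
  show ?thesis
  proof (cases "card Z \<ge> r")
    case True
    have "({1..n} - X1) \<union> ({1..n} - X2) \<in> F"
      using K_un[OF F K_compl[OF F X1F] K_compl[OF F X2F]] True unfolding Z_def by blast
    then have "{1..n} - (({1..n} - X1) \<union> ({1..n} - X2)) \<in> F" by (rule K_compl[OF F])
    moreover have "{1..n} - (({1..n} - X1) \<union> ({1..n} - X2)) = X1 \<inter> X2" using V1 V2 by blast
    ultimately have I: "X1 \<inter> X2 \<in> F" by simp
    have "X1 \<inter> X2 = X1" using I RI m1 unfolding minover_def by blast
    moreover have "X1 \<inter> X2 = X2" using I RI m2 unfolding minover_def by blast
    ultimately show ?thesis by simp
  next
    case False
    have UV: "X1 \<union> X2 \<subseteq> {1..n}" using V1 V2 by blast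
    have "card Z = card {1..n} - card (X1 \<union> X2)"
      unfolding ZU by (rule card_Diff_subset) (use f1 f2 UV in auto)
    then have cz: "card Z = n - card (X1 \<union> X2)" by simp
    have "card (X1 \<union> X2) \<le> card {1..n}" by (rule card_mono) (use UV in auto)
    then have "card (X1 \<union> X2) \<le> n" by simp
    then have u: "card (X1 \<union> X2) + r > n" using False cz by linarith
    have "card R \<le> card (X1 \<inter> X2)" by (rule card_mono) (use f1 RI in auto)
    then have ci: "card (X1 \<inter> X2) \<ge> Suc r" using R by simp
    have "card (X1 \<union> X2) + card (X1 \<inter> X2) = card X1 + card X2"
      using card_Un_Int[OF f1 f2] by simp
    then have False using u s1 s2 ci by linarith
    then show ?thesis ..
  qed
qed

lemma gen_in_K:
  assumes F: "F \<in> K_class r n" and K: "K \<in> K_class r n" and HK: "Hgen r n F \<subseteq> K"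
  shows "X \<in> F \<Longrightarrow> X \<in> K"
proof (induction "card X" arbitrary: X rule: less_induct)
  case less
  have IH: "Y \<in> K" if "card Y < card X" "Y \<in> F" for Y using less.hyps that by blast
  have XF: "X \<in> F" by (rule less.prems)
  have XV: "X \<subseteq> {1..n}" using K_sub[OF F XF] .
  have finX: "finite X" using XV finite_subset by blast
  show ?case
  proof (cases "card X \<le> r")
    case True
    then show ?thesis using K_small[OF K XV] by simp
  next
    case False
    show ?thesis
    proof (cases "\<exists>R. card R = Suc r \<and> minover F R X")
      case True
      show ?thesis
      proof (cases "2 * card X \<le> n")
        case True2: True
        have "X \<in> Hgen r n F" unfolding Hgen_def using True True2 False XF by simp
        then show ?thesis using HK by blast
      next
        case False2: False
        have cY: "card ({1..n} - X) = n - card X"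
          using card_Diff_subset[OF finX XV] by simp
        have "card ({1..n} - X) < card X" using cY False2 by linarith
        moreover have "{1..n} - X \<in> F" using K_compl[OF F XF] .
        ultimately have "{1..n} - X \<in> K" by (rule IH)
        then have "{1..n} - ({1..n} - X) \<in> K" by (rule K_compl[OF K])
        moreover have "{1..n} - ({1..n} - X) = X" using XV by blast
        ultimately show ?thesis by simp
      qed
    next
      case nomin: False
      have "r \<le> card X" using False by simp
      then obtain S where S: "S \<subseteq> X" "card S = r"
        using obtain_subset_with_card_n by blast
      have finS: "finite S" using S finX finite_subset by blast
      have ex: "\<exists>Y. Y \<in> F \<and> insert v S \<subseteq> Y \<and> Y \<subseteq> X \<and> Y \<noteq> X" if v: "v \<in> X - S" for v
      proof -
        have "v \<notin> S" using v by blast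
        then have c: "card (insert v S) = Suc r" using S finS by simp
        have s: "insert v S \<subseteq> X" using v S by blast
        have "\<not> minover F (insert v S) X" using nomin c by blast
        then show ?thesis using s unfolding minover_def by blast
      qed
      define Yf where "Yf v = (SOME Y. Y \<in> F \<and> insert v S \<subseteq> Y \<and> Y \<subseteq> X \<and> Y \<noteq> X)" for v
      have Yf: "Yf v \<in> F \<and> insert v S \<subseteq> Yf v \<and> Yf v \<subseteq> X \<and> Yf v \<noteq> X" if "v \<in> X - S" for v
        unfolding Yf_def by (rule someI_ex[OF ex[OF that]])
      have YK: "Yf v \<in> K" if v: "v \<in> X - S" for v
      proof -
        have "Yf v \<subset> X" using Yf[OF v] by blast
        then have "card (Yf v) < card X" using finX by (rule psubset_card_mono[rotated])
        then show ?thesis using IH Yf[OF v] by blast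
      qed
      have ne: "X - S \<noteq> {}"
      proof
        assume "X - S = {}"
        then have "X \<subseteq> S" by blast
        then have "card X \<le> card S" using finS card_mono by blast
        then show False using False S by simp
      qed
      have "\<Union>(Yf ` (X - S)) \<in> K"
      proof (rule K_union_family[OF K])
        show "finite (Yf ` (X - S))" using finX by simp
        show "Yf ` (X - S) \<noteq> {}" using ne by simp
        show "Yf ` (X - S) \<subseteq> K" using YK by blast
        show "S \<subseteq> Y" if "Y \<in> Yf ` (X - S)" for Y using that Yf by blast
        show "card S \<ge> r" using S by simp
      qed
      moreover have "\<Union>(Yf ` (X - S)) = X"
      proof
        show "\<Union>(Yf ` (X - S)) \<subseteq> X" using Yf by blast
        show "X \<subseteq> \<Union>(Yf ` (X - S))"
        proof
          fix x assume x: "x \<in> X"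
          obtain v where v: "v \<in> X - S" using ne by blast
          show "x \<in> \<Union>(Yf ` (X - S))"
          proof (cases "x \<in> S")
            case True
            then have "x \<in> Yf v" using Yf[OF v] by blast
            then show ?thesis using v by blast
          next
            case False
            then have xv: "x \<in> X - S" using x by blast
            then have "x \<in> Yf x" using Yf[OF xv] by blast
            then show ?thesis using xv by blast
          qed
        qed
      qed
      ultimately show ?thesis by simp
    qed
  qed
qed


lemma card_Hgen:
  assumes F: "F \<in> K_class r n"
  shows "card (Hgen r n F) \<le> n choose (Suc r)"
proof -
  define f where "f X = (SOME R. card R = Suc r \<and> minover F R X)" for X
  have fX: "card (f X) = Suc r \<and> minover F (f X) X" if "X \<in> Hgen r n F" for X
  proof -
    have "\<exists>R. card R = Suc r \<and> minover F R X" using that unfolding Hgen_def by blast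
    then show ?thesis unfolding f_def by (rule someI_ex)
  qed
  have inj: "inj_on f (Hgen r n F)"
  proof (rule inj_onI)
    fix X1 X2 assume a: "X1 \<in> Hgen r n F" "X2 \<in> Hgen r n F" "f X1 = f X2"
    show "X1 = X2" using minover_unique2[OF F a(1) a(2), of "f X1"] fX[OF a(1)] fX[OF a(2)] a(3) by simp
  qed
  have img: "f ` Hgen r n F \<subseteq> {R. R \<subseteq> {1..n} \<and> card R = Suc r}"
  proof
    fix R assume "R \<in> f ` Hgen r n F"
    then obtain X where X: "X \<in> Hgen r n F" "R = f X" by blast
    have "X \<subseteq> {1..n}" using X(1) K_sub[OF F] unfolding Hgen_def by blast
    then show "R \<in> {R. R \<subseteq> {1..n} \<and> card R = Suc r}" using fX[OF X(1)] X(2) unfolding minover_def by blast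
  qed
  have "card (Hgen r n F) \<le> card {R. R \<subseteq> {1..n} \<and> card R = Suc r}"
    using card_inj_on_le[OF inj img] by simp
  also have "\<dots> = n choose (Suc r)" using n_subsets[of "{1..n}" "Suc r"] by simp
  finally show ?thesis .
qed


lemma cl_Hgen:
  assumes F: "F \<in> K_class r n"
  shows "cl r n (Hgen r n F) = F"
proof
  have HF: "Hgen r n F \<subseteq> F" unfolding Hgen_def by blast
  have "F \<in> {\<E> \<in> K_class r n. Hgen r n F \<subseteq> \<E>}" using F HF by blast
  then show "cl r n (Hgen r n F) \<subseteq> F" unfolding cl_def by (rule Inter_lower)
  show "F \<subseteq> cl r n (Hgen r n F)"
    unfolding cl_def
  proof (rule Inter_greatest)
    fix K assume "K \<in> {\<E> \<in> K_class r n. Hgen r n F \<subseteq> \<E>}"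
    then have K: "K \<in> K_class r n" and HK: "Hgen r n F \<subseteq> K" by auto
    show "F \<subseteq> K" using gen_in_K[OF F K HK] by blast
  qed
qed


lemma gf2_rank_le_card:
  assumes "finite X"
  shows "gf2_rank E X Y \<le> card X"
proof -
  let ?A = "{card S | S. S \<subseteq> X \<and> gf2_indep E Y S}"
  have sub: "?A \<subseteq> {0..card X}" using assms card_mono by fastforce
  have fin: "finite ?A" using finite_subset[OF sub] by simp
  have ne: "?A \<noteq> {}"
  proof -
    have "gf2_indep E Y {}" unfolding gf2_indep_def by blast
    then show ?thesis by blast
  qed
  show ?thesis unfolding gf2_rank_def
    by (subst Max_le_iff[OF fin ne]) (auto intro: card_mono[OF assms])
qed

lemma cut_rank_le_card: "X \<subseteq> {1..n} \<Longrightarrow> cut_rank n E X \<le> card X"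
  unfolding cut_rank_def by (rule gf2_rank_le_card) (meson finite_atLeastAtMost finite_subset)



lemma cut_rank_le_card_compl:
  assumes G: "is_graph n E" and X: "X \<subseteq> {1..n}"
  shows "cut_rank n E X \<le> card ({1..n} - X)"
proof -
  have "cut_rank n E X = cut_rank n E ({1..n} - X)" using cut_rank_sym[OF G X] by simp
  also have "\<dots> \<le> card ({1..n} - X)" by (rule cut_rank_le_card) blast
  finally show ?thesis .
qed

lemma splits_K:
  assumes G: "is_graph n E" and rc: "rank_connected r n E"
  shows "splits_hypergraph r n E \<in> K_class r n"
proof -
  let ?F = "splits_hypergraph r n E"
  have P: "?F \<subseteq> Pow {1..n}" unfolding splits_hypergraph_def by blast
  have R0: "\<forall>X\<subseteq>{1..n}. card X \<le> r \<longrightarrow> X \<in> ?F"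
  proof (intro allI impI)
    fix X assume X: "X \<subseteq> {1..n}" and c: "card X \<le> r"
    have "cut_rank n E X \<le> r" using cut_rank_le_card[OF X, of E] c by linarith
    then show "X \<in> ?F" unfolding splits_hypergraph_def using X by blast
  qed
  have R1: "\<forall>A\<in>?F. {1..n} - A \<in> ?F"
  proof
    fix A assume "A \<in> ?F"
    then have A: "A \<subseteq> {1..n}" "cut_rank n E A \<le> r" unfolding splits_hypergraph_def by auto
    then show "{1..n} - A \<in> ?F" unfolding splits_hypergraph_def using cut_rank_sym[OF G A(1)] by auto
  qed
  have R2: "\<forall>A\<in>?F. \<forall>B\<in>?F. card (A \<inter> B) \<ge> r \<longrightarrow> A \<union> B \<in> ?F"
  proof (intro ballI impI)
    fix A B assume "A \<in> ?F" "B \<in> ?F" and c: "card (A \<inter> B) \<ge> r"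
    then have A: "A \<subseteq> {1..n}" "cut_rank n E A \<le> r" and B: "B \<subseteq> {1..n}" "cut_rank n E B \<le> r"
      unfolding splits_hypergraph_def by auto
    have UV: "A \<union> B \<subseteq> {1..n}" and IV: "A \<inter> B \<subseteq> {1..n}" using A B by auto
    have sm: "cut_rank n E (A \<inter> B) + cut_rank n E (A \<union> B) \<le> cut_rank n E A + cut_rank n E B"
      by (rule cut_rank_submod[OF A(1) B(1)])
    have "cut_rank n E (A \<union> B) \<le> r"
    proof (cases "cut_rank n E (A \<inter> B) \<ge> r")
      case True
      then show ?thesis using sm A B by linarith
    next
      case False
      then have "trivial_split n E (A \<inter> B)" using rc IV unfolding rank_connected_def
        by (meson not_le order_refl)
      then have t: "cut_rank n E (A \<inter> B) = min (card (A \<inter> B)) (card ({1..n} - (A \<inter> B)))"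
        unfolding trivial_split_def .
      then have t2: "cut_rank n E (A \<inter> B) = card ({1..n} - (A \<inter> B))" using False c by linarith
      have "card ({1..n} - (A \<union> B)) \<le> card ({1..n} - (A \<inter> B))"
        by (rule card_mono) auto
      then show ?thesis using cut_rank_le_card_compl[OF G UV] t2 False by linarith
    qed
    then show "A \<union> B \<in> ?F" unfolding splits_hypergraph_def using UV by blast
  qed
  show ?thesis unfolding K_class_def using P R0 R1 R2 by blast
qed

theorem theorem1:
  fixes r :: nat
  shows "\<exists>C::real. C > 0 \<and>
    (\<forall>n (E :: nat \<Rightarrow> nat \<Rightarrow> bool). is_graph n E \<and> rank_connected r n E \<longrightarrow>
       (\<exists>H. H \<subseteq> Pow {1..n} \<and> real (card H) \<le> C * real n ^ (r + 1) \<and>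
            cl r n H = splits_hypergraph r n E))"
proof (intro exI[of _ 1] conjI allI impI)
  show "(0::real) < 1" by simp
  fix n E assume a: "is_graph n E \<and> rank_connected r n E"
  let ?F = "splits_hypergraph r n E"
  have F: "?F \<in> K_class r n" using splits_K a by blast
  show "\<exists>H. H \<subseteq> Pow {1..n} \<and> real (card H) \<le> 1 * real n ^ (r + 1) \<and> cl r n H = ?F"
  proof (intro exI conjI)
    show "Hgen r n ?F \<subseteq> Pow {1..n}" unfolding Hgen_def splits_hypergraph_def by blast
    have "card (Hgen r n ?F) \<le> n choose (Suc r)" by (rule card_Hgen[OF F])
    also have "\<dots> \<le> n ^ Suc r"
    proof (cases "Suc r \<le> n")
      case True
      then show ?thesis by (rule binomial_le_pow)
    next
      case False
      then have "n choose Suc r = 0" by (intro binomial_eq_0) simp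
      then show ?thesis by linarith
    qed
    finally have "real (card (Hgen r n ?F)) \<le> real (n ^ Suc r)" by linarith
    then show "real (card (Hgen r n ?F)) \<le> 1 * real n ^ (r + 1)" by simp
    show "cl r n (Hgen r n ?F) = ?F" by (rule cl_Hgen[OF F])
  qed
qed
end
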